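(* For every quasiterm $X$ with $\mathrm{qGood}\;X$ and every varsort $xs$, the set $\{x : \mathrm{var} \mid \mathrm{qFresh}\;xs\;x\;X\}$ has cardinality $|\mathrm{var}|$.
   Context: Fix types $\mathrm{var}$ (variables), $\mathrm{varsort}$ (sorts of variables), $\mathrm{index}$, $\mathrm{bindex}$ (indexes of free and bound arguments) and $\mathrm{opsym}$ (operation symbols). For types $\alpha,\beta$, $(\alpha,\beta)\,\mathrm{input}$ is the type of partial functions $\alpha\to\beta\;\mathrm{option}$ (values $\mathrm{None}$ or $\mathrm{Some}\;b$); $\mathrm{dom}\,f=\{i\mid f\,i\neq\mathrm{None}\}$. For a predicate $P$ on $\beta$, $\uparrow P\;inp$ holds iff $P\,b$ for all $i$ with $inp\;i=\mathrm{Some}\;b$. Quasiterms and quasiabstractions are the mutually recursive free datatypes $\mathrm{qterm} = \mathrm{qVar}\;\mathrm{varsort}\;\mathrm{var} \mid \mathrm{qOp}\;\mathrm{opsym}\;((\mathrm{index},\mathrm{qterm})\,\mathrm{input})\;((\mathrm{bindex},\mathrm{qabs})\,\mathrm{input})$ and $\mathrm{qabs} = \mathrm{qAbs}\;\mathrm{varsort}\;\mathrm{var}\;\mathrm{qterm}$, where in $\mathrm{qAbs}\;xs\;x\;X$ the variable $x$ of varsort $xs$ is bound in $X$. $\mathrm{qFresh}\;xs\;x\;X$ means that the variable $x$ of varsort $xs$ has no free occurrence in $X$ (i.e. $\mathrm{qFresh}\;xs\;x\;(\mathrm{qVar}\;ys\;y)\iff (xs,x)\neq(ys,y)$; $\mathrm{qFresh}$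 holds for $\mathrm{qOp}\;\delta\;inp\;binp$ iff it holds for all components of $inp$ and $binp$; and it holds for $\mathrm{qAbs}\;ys\;y\;X$ iff $(xs,x)=(ys,y)$ or it holds for $X$). Goodness is defined mutually recursively: $\mathrm{qGood}(\mathrm{qVar}\;xs\;x)$ always; $\mathrm{qGood}(\mathrm{qOp}\;\delta\;inp\;binp)\iff \uparrow\mathrm{qGood}\;inp\wedge\uparrow\mathrm{qGoodAbs}\;binp\wedge|\mathrm{dom}\;inp|<|\mathrm{var}|\wedge|\mathrm{dom}\;binp|<|\mathrm{var}|$; $\mathrm{qGoodAbs}(\mathrm{qAbs}\;xs\;x\;X)\iff\mathrm{qGood}\;X$. Standing assumption: $|\mathrm{var}|$ is an infinite regular cardinal. *)

theory Defs
  imports Main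
begin

type_synonym ('a, 'b) input = "'a \<Rightarrow> 'b option"

definition liftAll :: "('b \<Rightarrow> bool) \<Rightarrow> ('a, 'b) input \<Rightarrow> bool" where
  "liftAll P inp \<longleftrightarrow> (\<forall>i b. inp i = Some b \<longrightarrow> P b)"

datatype ('index, 'bindex, 'varsort, 'var, 'opsym) qTerm =
    qVar 'varsort 'var
  | qOp 'opsym "('index, ('index, 'bindex, 'varsort, 'var, 'opsym) qTerm) input"
               "('bindex, ('index, 'bindex, 'varsort, 'var, 'opsym) qAbs) input"
and ('index, 'bindex, 'varsort, 'var, 'opsym) qAbs =
    qAbs 'varsort 'var "('index, 'bindex, 'varsort, 'var, 'opsym) qTerm"

primrec qFresh :: "'varsort \<Rightarrow> 'var \<Rightarrow> ('index, 'bindex, 'varsort, 'var, 'opsym) qTerm \<Rightarrow> bool"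
and qFreshAbs :: "'varsort \<Rightarrow> 'var \<Rightarrow> ('index, 'bindex, 'varsort, 'var, 'opsym) qAbs \<Rightarrow> bool"
where
  "qFresh xs x (qVar ys y) \<longleftrightarrow> (xs, x) \<noteq> (ys, y)"
| "qFresh xs x (qOp delta inp binp) \<longleftrightarrow>
     liftAll id (map_option (qFresh xs x) \<circ> inp) \<and> liftAll id (map_option (qFreshAbs xs x) \<circ> binp)"
| "qFreshAbs xs x (qAbs ys y X) \<longleftrightarrow> (xs, x) = (ys, y) \<or> qFresh xs x X"

primrec qGood :: "('index, 'bindex, 'varsort, 'var, 'opsym) qTerm \<Rightarrow> bool"
and qGoodAbs :: "('index, 'bindex, 'varsort, 'var, 'opsym) qAbs \<Rightarrow> bool"
where
  "qGood (qVar xs x) \<longleftrightarrow> True"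
| "qGood (qOp delta inp binp) \<longleftrightarrow>
     liftAll id (map_option qGood \<circ> inp) \<and> liftAll id (map_option qGoodAbs \<circ> binp) \<and>
     ordLess2 (card_of (dom inp)) (card_of (UNIV :: 'var set)) \<and>
     ordLess2 (card_of (dom binp)) (card_of (UNIV :: 'var set))"
| "qGoodAbs (qAbs xs x X) \<longleftrightarrow> qGood X"

lemma qFresh_qOp_liftAll:
  "qFresh xs x (qOp delta inp binp) \<longleftrightarrow> liftAll (qFresh xs x) inp \<and> liftAll (qFreshAbs xs x) binp"
  by (auto simp: liftAll_def) blast+

lemma qGood_qOp_liftAll:
  "qGood (qOp delta inp binp) \<longleftrightarrow> liftAll qGood inp \<and> liftAll qGoodAbs binp \<and>
     ordLess2 (card_of (dom inp)) (card_of (UNIV :: 'var set)) \<and>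
     ordLess2 (card_of (dom binp)) (card_of (UNIV :: 'var set))"
  for binp :: "('bindex, ('index, 'bindex, 'varsort, 'var, 'opsym) qAbs) input"
  by (auto simp: liftAll_def) blast+

end

theory Submission imports Defs begin
unbundle cardinal_syntax

lemma nf:
  fixes X :: "('index, 'bindex, 'varsort, 'var, 'opsym) qTerm"
    and A :: "('index, 'bindex, 'varsort, 'var, 'opsym) qAbs"
  assumes inf: "infinite (UNIV :: 'var set)"
    and reg: "regularCard (card_of (UNIV :: 'var set))"
  shows "qGood X \<Longrightarrow> |{x. \<not> qFresh xs x X}| <o |UNIV :: 'var set|"
    and "qGoodAbs A \<Longrightarrow> |{x. \<not> qFreshAbs xs x A}| <o |UNIV :: 'var set|"
proof (induction X and A)
  case (qVar ys y)
  have "{x. \<not> qFresh xs x (qVar ys y :: ('index, 'bindex, 'varsort, 'var, 'opsym) qTerm)} \<subseteq> {y}" by auto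
  hence "finite {x. \<not> qFresh xs x (qVar ys y :: ('index, 'bindex, 'varsort, 'var, 'opsym) qTerm)}"
    using finite_subset by blast
  then show ?case using inf finite_ordLess_infinite[OF card_of_Well_order card_of_Well_order, unfolded Field_card_of] by blast
next
  case (qOp delta inp binp)
  have CI: "Cinfinite |UNIV :: 'var set|" using inf by (simp add: cinfinite_def card_of_card_order_on Field_card_of)
  note g = qOp.prems
  define N1 where "N1 = (\<Union>i \<in> dom inp. {x. \<not> qFresh xs x (the (inp i))})"
  define N2 where "N2 = (\<Union>i \<in> dom binp. {x. \<not> qFreshAbs xs x (the (binp i))})"
  have eq: "{x. \<not> qFresh xs x (qOp delta inp binp)} = N1 \<union> N2"
  proof (rule set_eqI)
    fix x
    show "x \<in> {x. \<not> qFresh xs x (qOp delta inp binp)} \<longleftrightarrow> x \<in> N1 \<union> N2"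
      unfolding N1_def N2_def qFresh_qOp_liftAll liftAll_def mem_Collect_eq Un_iff UN_iff dom_def
      by force
  qed
  have "|N1| <o |UNIV :: 'var set|"
    unfolding N1_def
  proof (rule card_of_UNION_ordLess_infinite_Field_regularCard[OF reg CI])
    show "|dom inp| <o |UNIV :: 'var set|" using g by simp
    show "\<forall>i\<in>dom inp. |{x. \<not> qFresh xs x (the (inp i))}| <o |UNIV :: 'var set|"
    proof
      fix i assume "i \<in> dom inp"
      then obtain b where b: "inp i = Some b" by auto
      have "qGood b" using g b unfolding qGood_qOp_liftAll liftAll_def by blast
      then show "|{x. \<not> qFresh xs x (the (inp i))}| <o |UNIV :: 'var set|"
        using qOp.IH(1)[of "inp i" b] b by (simp add: range_eqI[of _ _ i])
    qed
  qed
  moreover have "|N2| <o |UNIV :: 'var set|"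
    unfolding N2_def
  proof (rule card_of_UNION_ordLess_infinite_Field_regularCard[OF reg CI])
    show "|dom binp| <o |UNIV :: 'var set|" using g by simp
    show "\<forall>i\<in>dom binp. |{x. \<not> qFreshAbs xs x (the (binp i))}| <o |UNIV :: 'var set|"
    proof
      fix i assume "i \<in> dom binp"
      then obtain b where b: "binp i = Some b" by auto
      have "qGoodAbs b" using g b unfolding qGood_qOp_liftAll liftAll_def by blast
      then show "|{x. \<not> qFreshAbs xs x (the (binp i))}| <o |UNIV :: 'var set|"
        using qOp.IH(2)[of "binp i" b] b by (simp add: range_eqI[of _ _ i])
    qed
  qed
  ultimately show ?case
    unfolding eq using card_of_Un_ordLess_infinite[OF inf] by blast
next
  case (qAbs ys y X)
  have "{x. \<not> qFreshAbs xs x (qAbs ys y X)} \<subseteq> {x. \<not> qFresh xs x X}" by auto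
  moreover have "|{x. \<not> qFresh xs x X}| <o |UNIV :: 'var set|" using qAbs by simp
  ultimately show ?case using ordLeq_ordLess_trans[OF card_of_mono1] by blast
qed

theorem proposition1:
  fixes X :: "('index, 'bindex, 'varsort, 'var, 'opsym) qTerm" and xs :: 'varsort
  assumes var_infinite: "infinite (UNIV :: 'var set)"
    and var_regular: "regularCard (card_of (UNIV :: 'var set))"
    and good: "qGood X"
  shows "ordIso2 (card_of {x :: 'var. qFresh xs x X}) (card_of (UNIV :: 'var set))"
proof -
  let ?F = "{x :: 'var. qFresh xs x X}"
  let ?N = "{x :: 'var. \<not> qFresh xs x X}"
  have N: "|?N| <o |UNIV :: 'var set|" using nf(1)[OF var_infinite var_regular good] .
  have le: "|?F| \<le>o |UNIV :: 'var set|" by (rule card_of_mono1) simp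
  have "\<not> |?F| <o |UNIV :: 'var set|"
  proof
    assume "|?F| <o |UNIV :: 'var set|"
    hence "|?N \<union> ?F| <o |UNIV :: 'var set|" using N card_of_Un_ordLess_infinite[OF var_infinite] by blast
    moreover have "?N \<union> ?F = UNIV" by auto
    ultimately show False using not_ordLess_ordIso ordIso_refl card_of_Card_order by metis
  qed
  thus ?thesis using le ordLeq_iff_ordLess_or_ordIso by blast
qed
end
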